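(* Under the hypotheses of Theorem 1, and assuming moreover $W_u[0]>\tau/(1-\sigma f)$, with the user following $\pi_u$ and the adversary following $\pi_a$ in a game with unboundedly many epochs, the fraction of user MEV transactions that are front-run during epoch $e$, namely $$\frac{\lfloor \tilde W_a[e-1]/y\rfloor}{\lceil (\tilde W_u[e-1]-\tau)/y\rceil},$$ tends to $0$ as $e\to\infty$.
   Context: Token game (Masquerade model). Discrete rounds; a user and an adversary with initial wealths $W_u[0]$, $W_a[0]$; token cost $y>0$, MEV profit $\eta>0$, front-run fraction $f\in(0,1)$, user threshold $\tau>0$. Tokens cost $y$, have numbers increasing in purchase order, never expire, are single-use, and are refunded $y$ when used. Each round the user makes at most one tokenized MEV transaction with token $T_u$; it is front-run iff the adversary uses a token $T_a<T_u$; front-run: user earns $\eta-f\eta$, adversary $f\eta$; otherwise user earns $\eta$, adversary $0$. User policy $\pi_u$: each round buy one token if available wealth exceeds $y$; if available wealth $\le\tau$, make a tokenized MEV transaction with its lowest unused token. Adversary policy $\pi_a$: knows the user's tokens; each round buys $\lfloor (\text{available wealth})/y\rfloor$ tokens, purchases ordered before the user's; front-runs each user transaction with its largest unused token below $T_u$ if one exists. Epochs: the first ends when the user's available wealth drops below $\tau$; each later epoch ends once the user has used all tokens bought in the previous epoch and its available wealth drops below $\tau$. During epoch $e$ the user makes $\lceil (\tilde W_u[e-1]-\tau)/y\rceil$ MEV transactions and the adversary front-runs $\lfloor \tilde W_a[e-1]/y\rfloor$ of them. $\tilde W_a[e]$, $\tilde W_u[e]$: total wealth (available plus locked in tokens)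 at end of epoch $e$, with $\tilde W_a[0]=W_a[0]$, $\tilde W_u[0]=W_u[0]$. Theorem 1 hypotheses: $0<\sigma<1/2$, $\epsilon<\frac{yf+f^2\eta}{\eta(1-f)}$, $W_a[0]<\sigma W_u[0]$, $f<\frac{1-\sigma-\epsilon}{1+\sigma}$, $W_a[0]>\frac{y^2}{\eta\epsilon}$, $\tau<\epsilon W_u[0]$. *)

theory Defs
  imports Complex_Main
begin

text \<open>Tokens are refunded when used, so total wealth (available plus locked in tokens) changes only
  through MEV profits. During epoch e the user makes ceil((Wu[e-1]-tau)/y) MEV transactions
  and the adversary front-runs floor(Wa[e-1]/y) of them; each front-run transaction gives the
  user eta - f*eta and the adversary f*eta, each other one gives the user eta.
  epoch_wealth y eta f tau Wu0 Wa0 e = (total user wealth, total adversary wealth) at the end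
  of epoch e, with epoch 0 meaning the initial state.\<close>

fun epoch_wealth :: "real \<Rightarrow> real \<Rightarrow> real \<Rightarrow> real \<Rightarrow> real \<Rightarrow> real \<Rightarrow> nat \<Rightarrow> real \<times> real" where
  "epoch_wealth y eta f tau Wu0 Wa0 0 = (Wu0, Wa0)"
| "epoch_wealth y eta f tau Wu0 Wa0 (Suc e) =
     (let wu = fst (epoch_wealth y eta f tau Wu0 Wa0 e);
          wa = snd (epoch_wealth y eta f tau Wu0 Wa0 e);
          nu = \<lceil>(wu - tau) / y\<rceil>;
          na = \<lfloor>wa / y\<rfloor>
      in (wu + of_int nu * eta - of_int na * (f * eta), wa + of_int na * (f * eta)))"

definition Wu_tilde :: "real \<Rightarrow> real \<Rightarrow> real \<Rightarrow> real \<Rightarrow> real \<Rightarrow> real \<Rightarrow> nat \<Rightarrow> real" where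
  "Wu_tilde y eta f tau Wu0 Wa0 e = fst (epoch_wealth y eta f tau Wu0 Wa0 e)"

definition Wa_tilde :: "real \<Rightarrow> real \<Rightarrow> real \<Rightarrow> real \<Rightarrow> real \<Rightarrow> real \<Rightarrow> nat \<Rightarrow> real" where
  "Wa_tilde y eta f tau Wu0 Wa0 e = snd (epoch_wealth y eta f tau Wu0 Wa0 e)"

end

theory Submission
  imports Defs
begin

theorem theorem2:
  fixes y eta f tau Wu0 Wa0 \<sigma> \<epsilon> :: real
  assumes "y > 0" and "eta > 0" and "0 < f" and "f < 1" and "tau > 0"
    and "0 < \<sigma>" and "\<sigma> < 1/2"
    and "\<epsilon> < (y * f + f\<^sup>2 * eta) / (eta * (1 - f))"
    and "Wa0 < \<sigma> * Wu0"
    and "f < (1 - \<sigma> - \<epsilon>) / (1 + \<sigma>)"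
    and "Wa0 > y\<^sup>2 / (eta * \<epsilon>)"
    and "tau < \<epsilon> * Wu0"
    and "Wu0 > tau / (1 - \<sigma> * f)"
  shows "(\<lambda>e. of_int \<lfloor>Wa_tilde y eta f tau Wu0 Wa0 (e - 1) / y\<rfloor>
              / of_int \<lceil>(Wu_tilde y eta f tau Wu0 Wa0 (e - 1) - tau) / y\<rceil>)
         \<longlonglongrightarrow> (0::real)"
proof -
  note y = assms(1) and eta = assms(2) and f0 = assms(3) and f1 = assms(4) and tau = assms(5)
  note s0 = assms(6) and s1 = assms(7)
  define wu where "wu = Wu_tilde y eta f tau Wu0 Wa0"
  define wa where "wa = Wa_tilde y eta f tau Wu0 Wa0"
  define a where "a = eta * (1 - \<sigma> * f) / y"
  define b where "b = f * eta / y"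
  define c where "c = tau / (1 - \<sigma> * f)"
  have sf: "1 - \<sigma> * f > 0"
  proof -
    have "\<sigma> * f < 1/2 * 1" using s0 s1 f0 f1 by (intro mult_strict_mono) auto
    thus ?thesis by simp
  qed
  have Wu0c: "Wu0 > c" using assms(13) c_def by simp
  have cpos: "c > 0" using c_def sf tau by simp
  have Wu0pos: "Wu0 > 0" using Wu0c cpos by simp
  have epos: "\<epsilon> > 0"
  proof (rule ccontr)
    assume "\<not> \<epsilon> > 0"
    hence "\<epsilon> * Wu0 \<le> 0" using Wu0pos by (simp add: mult_nonpos_nonneg)
    thus False using assms(12) tau by simp
  qed
  have Wa0pos: "Wa0 > 0"
  proof -
    have "y\<^sup>2 / (eta * \<epsilon>) > 0" using y eta epos by simp
    thus ?thesis using assms(11) by simp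
  qed
  have fs: "(1 + \<sigma>) * f < 1 - \<sigma> - \<epsilon>"
    using assms(10) s0 by (simp add: field_simps)
  have ab: "b < a"
  proof -
    have "f < 1 - \<sigma> * f" using fs s0 epos by (simp add: algebra_simps)
    hence "f * eta < eta * (1 - \<sigma> * f)" using eta by (simp add: mult.commute)
    thus ?thesis unfolding a_def b_def using y by (simp add: divide_strict_right_mono)
  qed
  have bpos: "b > 0" unfolding b_def using f0 eta y by simp
  have wu_Suc: "wu (Suc n) = wu n + of_int \<lceil>(wu n - tau) / y\<rceil> * eta
                   - of_int \<lfloor>wa n / y\<rfloor> * (f * eta)" for n
    unfolding wu_def wa_def Wu_tilde_def Wa_tilde_def by (simp add: Let_def)
  have wa_Suc: "wa (Suc n) = wa n + of_int \<lfloor>wa n / y\<rfloor> * (f * eta)" for n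
    unfolding wu_def wa_def Wu_tilde_def Wa_tilde_def by (simp add: Let_def)
  have inv: "Wu0 \<le> wu n \<and> 0 \<le> wa n \<and> wa n \<le> \<sigma> * wu n \<and> wa n \<le> Wa0 * (1 + b) ^ n
            \<and> (1 + a) ^ n * (Wu0 - c) \<le> wu n - c" for n
  proof (induction n)
    case 0
    then show ?case using Wa0pos assms(9)
      by (simp add: wu_def wa_def Wu_tilde_def Wa_tilde_def)
  next
    case (Suc n)
    define u where "u = wu n"
    define v where "v = wa n"
    define nu where "nu = real_of_int \<lceil>(u - tau) / y\<rceil>"
    define na where "na = real_of_int \<lfloor>v / y\<rfloor>"
    have IH: "Wu0 \<le> u" "0 \<le> v" "v \<le> \<sigma> * u" "v \<le> Wa0 * (1 + b) ^ n"
      "(1 + a) ^ n * (Wu0 - c) \<le> u - c" using Suc.IH u_def v_def by auto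
    have u': "wu (Suc n) = u + nu * eta - na * (f * eta)" using wu_Suc u_def v_def nu_def na_def by simp
    have v': "wa (Suc n) = v + na * (f * eta)" using wa_Suc v_def na_def by simp
    have nu1: "(u - tau) / y \<le> nu" unfolding nu_def by linarith
    have na1: "na \<le> v / y" unfolding na_def by linarith
    have na0: "0 \<le> na" unfolding na_def using IH(2) y by simp
    have nueta: "eta * (u - tau) / y \<le> nu * eta" using nu1 eta
      by (metis mult.commute mult_right_mono less_imp_le times_divide_eq_right)
    have naeta: "na * (f * eta) \<le> f * eta * v / y" using na1 f0 eta
      by (metis mult.commute mult_right_mono less_imp_le times_divide_eq_right mult_pos_pos)
    have L: "wu (Suc n) \<ge> u + eta * (u - tau) / y - f * eta * v / y"
      using u' nueta naeta by linarith
    have fsv: "f * eta * v / y \<le> f * eta * (\<sigma> * u) / y"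
      using IH(3) f0 eta y by (simp add: divide_right_mono mult_left_mono)
    have L2: "wu (Suc n) \<ge> (1 + a) * u - tau * eta / y"
    proof -
      have "u + eta * (u - tau) / y - f * eta * (\<sigma> * u) / y = (1 + a) * u - tau * eta / y"
        unfolding a_def using y by (simp add: field_simps)
      thus ?thesis using L fsv by linarith
    qed
    have uc: "u > c" using IH(1) Wu0c by simp
    have ut: "u * (1 - \<sigma> * f) > tau" using uc sf unfolding c_def by (simp add: field_simps)
    have mono: "wu (Suc n) \<ge> u"
    proof -
      have "eta * (u * (1 - \<sigma> * f) - tau) / y \<ge> 0" using ut eta y by simp
      moreover have "(1 + a) * u - tau * eta / y - u = eta * (u * (1 - \<sigma> * f) - tau) / y"
        unfolding a_def using y by (simp add: field_simps)
      ultimately have "(1 + a) * u - tau * eta / y \<ge> u" by linarith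
      thus ?thesis using L2 by simp
    qed
    have grow: "wu (Suc n) - c \<ge> (1 + a) * (u - c)"
    proof -
      have "a * c = tau * eta / y" unfolding a_def c_def using sf y by (simp add: field_simps)
      thus ?thesis using L2 by (simp add: algebra_simps)
    qed
    have gpos: "(1 + a) ^ Suc n * (Wu0 - c) \<le> (1 + a) * (u - c)"
    proof -
      have "a > 0" unfolding a_def using eta sf y by simp
      hence "(1 + a) * ((1 + a) ^ n * (Wu0 - c)) \<le> (1 + a) * (u - c)"
        using IH(5) by (intro mult_left_mono) auto
      thus ?thesis by (simp add: mult.assoc)
    qed
    have vb: "wa (Suc n) \<le> v * (1 + b)"
      using v' naeta unfolding b_def by (simp add: field_simps)
    have vb2: "v * (1 + b) \<le> Wa0 * (1 + b) ^ Suc n"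
      using IH(4) bpos by (simp add: mult.commute mult_right_mono)
    have v0: "wa (Suc n) \<ge> 0" using v' na0 IH(2) f0 eta by simp
    have sig: "wa (Suc n) \<le> \<sigma> * wu (Suc n)"
    proof -
      have eu: "\<epsilon> * u > tau" using assms(12) IH(1) epos
        by (smt (verit) mult_left_mono)
      have k: "u * (1 - (1 + \<sigma>) * f) \<ge> \<epsilon> * u"
      proof -
        have "\<epsilon> \<le> 1 - (1 + \<sigma>) * f" using fs s0 by linarith
        hence "u * \<epsilon> \<le> u * (1 - (1 + \<sigma>) * f)" using IH(1) Wu0pos
          by (intro mult_left_mono) auto
        thus ?thesis by (simp add: mult.commute)
      qed
      have p1: "\<sigma> * eta / y * (u * (1 - (1 + \<sigma>) * f) - tau) \<ge> 0"
        using k eu s0 eta y by simp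
      have p2: "(\<sigma> * u - v) * (1 + (1 + \<sigma>) * f * eta / y) \<ge> 0"
        using IH(3) s0 f0 eta y by simp
      have nu2: "\<sigma> * (nu * eta) \<ge> \<sigma> * (eta * (u - tau) / y)" using nueta s0 by (intro mult_left_mono) auto
      have na2: "(1 + \<sigma>) * (na * (f * eta)) \<le> (1 + \<sigma>) * (f * eta * v / y)"
        using naeta s0 by (intro mult_left_mono) auto
      have "\<sigma> * wu (Suc n) - wa (Suc n) = \<sigma> * u - v + \<sigma> * (nu * eta) - (1 + \<sigma>) * (na * (f * eta))"
        unfolding u' v' by (simp add: algebra_simps)
      also have "\<dots> \<ge> \<sigma> * u - v + \<sigma> * (eta * (u - tau) / y) - (1 + \<sigma>) * (f * eta * v / y)"
        using nu2 na2 by linarith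
      finally have A: "\<sigma> * wu (Suc n) - wa (Suc n) \<ge> \<sigma> * u - v + \<sigma> * (eta * (u - tau) / y) - (1 + \<sigma>) * (f * eta * v / y)" .
      have "\<sigma> * u - v + \<sigma> * (eta * (u - tau) / y) - (1 + \<sigma>) * (f * eta * v / y)
            = (\<sigma> * u - v) * (1 + (1 + \<sigma>) * f * eta / y) + \<sigma> * eta / y * (u * (1 - (1 + \<sigma>) * f) - tau)"
        using y by (simp add: field_simps)
      thus ?thesis using A p1 p2 by linarith
    qed
    show ?case using mono IH(1) v0 sig vb vb2 grow gpos by linarith
  qed
  define q where "q = (1 + b) / (1 + a)"
  define K where "K = Wa0 / (Wu0 - c)"
  have q0: "0 \<le> q" "q < 1" unfolding q_def using ab bpos by auto
  have bound: "(0::real) \<le> of_int \<lfloor>wa n / y\<rfloor> / of_int \<lceil>(wu n - tau) / y\<rceil>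
      \<and> of_int \<lfloor>wa n / y\<rfloor> / of_int \<lceil>(wu n - tau) / y\<rceil> \<le> K * q ^ n" for n
  proof -
    have I: "Wu0 \<le> wu n" "0 \<le> wa n" "wa n \<le> Wa0 * (1 + b) ^ n"
      "(1 + a) ^ n * (Wu0 - c) \<le> wu n - c" using inv[of n] by auto
    have ct: "tau \<le> c" unfolding c_def using tau sf s0 f0
      by (simp add: le_divide_eq mult_pos_pos)
    have apos: "1 + a > 0"
    proof -
      have "a > 0" unfolding a_def using eta sf y by simp
      thus ?thesis by simp
    qed
    have D: "(1 + a) ^ n * (Wu0 - c) \<le> wu n - tau" using I(4) ct by linarith
    have Dpos: "(1 + a) ^ n * (Wu0 - c) > 0" using apos Wu0c by simp
    have nu1: "(wu n - tau) / y \<le> of_int \<lceil>(wu n - tau) / y\<rceil>" by linarith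
    have na1: "of_int \<lfloor>wa n / y\<rfloor> \<le> wa n / y" by linarith
    have na0: "(0::real) \<le> of_int \<lfloor>wa n / y\<rfloor>" using I(2) y by simp
    have nupos: "(wu n - tau) / y > 0" using D Dpos y by simp
    have "of_int \<lfloor>wa n / y\<rfloor> / of_int \<lceil>(wu n - tau) / y\<rceil> \<le> (wa n / y) / ((wu n - tau) / y)"
      by (rule frac_le) (use nu1 na1 na0 nupos I(2) y in auto)
    also have "\<dots> = wa n / (wu n - tau)" using y by simp
    also have "\<dots> \<le> (Wa0 * (1 + b) ^ n) / ((1 + a) ^ n * (Wu0 - c))"
      by (rule frac_le) (use I(2,3) D Dpos in auto)
    also have "\<dots> = K * q ^ n" unfolding K_def q_def by (simp add: power_divide)
    finally show ?thesis using na0 nupos nu1 by (simp add: divide_nonneg_pos)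
  qed
  have lim: "(\<lambda>n. K * q ^ n) \<longlonglongrightarrow> 0"
    using q0 by (simp add: LIMSEQ_power_zero tendsto_mult_right_zero)
  have g: "(\<lambda>n. of_int \<lfloor>wa n / y\<rfloor> / of_int \<lceil>(wu n - tau) / y\<rceil>) \<longlonglongrightarrow> (0::real)"
    by (rule tendsto_sandwich[OF _ _ tendsto_const lim]) (use bound in auto)
  show ?thesis
    apply (rule LIMSEQ_imp_Suc)
    using g unfolding wu_def wa_def by simp
qed

end
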